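(* Let $R$ be an associative ring with identity and let $e_1, e_2$ be idempotents of $R$ with $e_1 \sim_o e_2$. Then there is an inner automorphism of $R$ (a map $x \mapsto wxw^{-1}$ for some unit $w \in R$) sending $e_1$ to $e_2$.
   Context: Let $\gamma(R)$ be the directed graph whose vertices are the idempotents of $R$, with an edge $f \to g$ if and only if $fg = 0$; $g$ is then called an out-neighbour of $f$. For idempotents $e, e'$, write $e \sim_o e'$ if they have the same set of out-neighbours in $\gamma(R)$, i.e. for every idempotent $f \in R$, $ef = 0 \iff e'f = 0$. *)

theory Defs
  imports Main
begin

definition idempotent :: "'a::ring_1 \<Rightarrow> bool" where
  "idempotent e \<longleftrightarrow> e * e = e"

text \<open>Out-neighbours of an idempotent f in the idempotent graph: idempotents g with f g = 0.\<close>
definition out_nbrs :: "'a::ring_1 \<Rightarrow> 'a set" where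
  "out_nbrs f = {g. idempotent g \<and> f * g = 0}"

definition sim_o :: "'a::ring_1 \<Rightarrow> 'a \<Rightarrow> bool" where
  "sim_o e e' \<longleftrightarrow> out_nbrs e = out_nbrs e'"

definition ring_unit :: "'a::ring_1 \<Rightarrow> bool" where
  "ring_unit w \<longleftrightarrow> (\<exists>v. w * v = 1 \<and> v * w = 1)"

definition ring_inv :: "'a::ring_1 \<Rightarrow> 'a" where
  "ring_inv w = (THE v. w * v = 1 \<and> v * w = 1)"

definition inner_aut :: "'a::ring_1 \<Rightarrow> 'a \<Rightarrow> 'a" where
  "inner_aut w x = w * x * ring_inv w"

end

theory Submission
  imports Defs
begin

lemma ring_inv_eq:
  fixes w v :: "'a::ring_1"
  assumes "w * v = 1" "v * w = 1"
  shows "ring_inv w = v"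
  unfolding ring_inv_def
proof (rule the_equality)
  show "w * v = 1 \<and> v * w = 1" using assms by simp
next
  fix u assume "w * u = 1 \<and> u * w = 1"
  then have h: "w * u = 1" by auto
  have "u = (v * w) * u" using assms by simp
  also have "\<dots> = v * (w * u)" by (simp add: mult.assoc)
  also have "\<dots> = v" using h by simp
  finally show "u = v" .
qed

theorem theorem5:
  fixes e1 e2 :: "'a::ring_1"
  assumes "idempotent e1" and "idempotent e2" and "sim_o e1 e2"
  shows "\<exists>w. ring_unit w \<and> inner_aut w e1 = e2"
proof -
  have i1: "e1 * e1 = e1" and i2: "e2 * e2 = e2" using assms(1,2) by (auto simp: idempotent_def)
  have id1: "idempotent (1 - e1)" using i1 by (simp add: idempotent_def algebra_simps)
  have id2: "idempotent (1 - e2)" using i2 by (simp add: idempotent_def algebra_simps)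
  have "1 - e1 \<in> out_nbrs e1" using id1 i1 by (simp add: out_nbrs_def algebra_simps)
  hence "1 - e1 \<in> out_nbrs e2" using assms(3) by (simp add: sim_o_def)
  hence "e2 * (1 - e1) = 0" by (simp add: out_nbrs_def)
  hence a: "e2 * e1 = e2" by (simp add: algebra_simps)
  have "1 - e2 \<in> out_nbrs e2" using id2 i2 by (simp add: out_nbrs_def algebra_simps)
  hence "1 - e2 \<in> out_nbrs e1" using assms(3) by (simp add: sim_o_def)
  hence "e1 * (1 - e2) = 0" by (simp add: out_nbrs_def)
  hence b: "e1 * e2 = e1" by (simp add: algebra_simps)
  define d where "d = e2 - e1"
  have dd: "d * d = 0" unfolding d_def using a b i1 i2 by (simp add: algebra_simps)
  define w where "w = 1 + d"
  define v where "v = 1 - d"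
  have wv: "w * v = 1" "v * w = 1" unfolding w_def v_def using dd by (simp_all add: algebra_simps)
  have ri: "ring_inv w = v" by (rule ring_inv_eq[OF wv])
  have we: "w * e1 = e2 * w" unfolding w_def d_def using a b i1 i2 by (simp add: algebra_simps)
  have "inner_aut w e1 = e2 * w * v" unfolding inner_aut_def ri we ..
  also have "\<dots> = e2" using wv by (simp add: mult.assoc)
  finally have "inner_aut w e1 = e2" .
  moreover have "ring_unit w" unfolding ring_unit_def using wv by blast
  ultimately show ?thesis by blast
qed

end
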